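(* Let $(\mathcal X,d,\mu)$ be an RD-space with upper dimension constant $n$ (see context). Let $q\in(\max\{1,n/2\},\infty]$ and let $U\in\mathcal B_q(\mathcal X)$ be a nonnegative function which is not almost everywhere zero and such that the measure $U(z)\,d\mu(z)$ is doubling (i.e. there is $C>0$ with $\int_{B(x,2r)}U\,d\mu\le C\int_{B(x,r)}U\,d\mu$ for all $x\in\mathcal X$, $r>0$). For $x\in\mathcal X$ set $$\rho(x)=\sup\Big\{r>0:\ \frac{r^2}{V_r(x)}\int_{B(x,r)}U(y)\,d\mu(y)\le 1\Big\}.$$ Then $0<\rho(x)<\infty$ for every $x$, and $\rho$ is an admissible function, i.e. there exist constants $C_3,k_0>0$ such that for all $x,y\in\mathcal X$, $$\rho(y)\le C_3[\rho(x)]^{1/(1+k_0)}[\rho(x)+d(x,y)]^{k_0/(1+k_0)}.$$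
   Context: An RD-space is a triple $(\mathcal X,d,\mu)$ where $(\mathcal X,d)$ is a metric space and $\mu$ a regular Borel measure such that every ball $B(x,r)=\{y:d(x,y)<r\}$ has finite positive measure, $\mu$ is doubling ($\mu(B(x,2r))\le C_1\mu(B(x,r))$ for all $x$, $r>0$), and there exist constants $0<\kappa\le n$ and $C_2\ge1$ such that for all $x\in\mathcal X$, $0<r<\operatorname{diam}(\mathcal X)/2$ and $1\le\lambda<\operatorname{diam}(\mathcal X)/(2r)$, $C_2^{-1}\lambda^\kappa\mu(B(x,r))\le\mu(B(x,\lambda r))\le C_2\lambda^n\mu(B(x,r))$. Throughout, $\mu(\mathcal X)=\infty$. Notation: $V_r(x)=\mu(B(x,r))$, $V(x,y)=\mu(B(x,d(x,y)))$. Reverse Hölder class: for $q\in(1,\infty]$, a nonnegative locally integrable $U$ belongs to $\mathcal B_q(\mathcal X)$ if there is $C>0$ such that for every ball $B$, $\big(\frac1{\mu(B)}\int_B U^q\,d\mu\big)^{1/q}\le C\frac1{\mu(B)}\int_B U\,d\mu$ (with the usual essential-supremum modification when $q=\infty$). *)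

theory Defs
  imports "HOL-Analysis.Analysis"
begin

definition space_diam :: "'a::metric_space itself \<Rightarrow> ereal" where
  "space_diam _ = (SUP p \<in> (UNIV :: ('a \<times> 'a) set). ereal (dist (fst p) (snd p)))"

definition regular_borel :: "'a::metric_space measure \<Rightarrow> bool" where
  "regular_borel M \<longleftrightarrow> space M = UNIV \<and> sets M = sets borel \<and>
     (\<forall>A \<in> sets M. emeasure M A = (INF W \<in> {W. open W \<and> A \<subseteq> W}. emeasure M W))"

text \<open>The conditions on r and lambda:  0 < r < diam/2 and 1 <= lambda < diam/(2r)
  are written as  2r < diam  and  2 lambda r < diam  (r > 0).\<close>
definition rd_space :: "'a::metric_space measure \<Rightarrow> real \<Rightarrow> real \<Rightarrow> bool" where
  "rd_space M \<kappa> n \<longleftrightarrow>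
     regular_borel M \<and>
     (\<forall>x r. 0 < r \<longrightarrow> 0 < emeasure M (ball x r) \<and> emeasure M (ball x r) < \<infinity>) \<and>
     (\<exists>C1. \<forall>x r. 0 < r \<longrightarrow> measure M (ball x (2*r)) \<le> C1 * measure M (ball x r)) \<and>
     0 < \<kappa> \<and> \<kappa> \<le> n \<and>
     (\<exists>C2\<ge>1. \<forall>x r lam. 0 < r \<longrightarrow> ereal (2*r) < space_diam TYPE('a) \<longrightarrow>
         1 \<le> lam \<longrightarrow> ereal (2*lam*r) < space_diam TYPE('a) \<longrightarrow>
           (1/C2) * lam powr \<kappa> * measure M (ball x r) \<le> measure M (ball x (lam*r)) \<and>
           measure M (ball x (lam*r)) \<le> C2 * lam powr n * measure M (ball x r))"

definition Vr :: "'a::metric_space measure \<Rightarrow> real \<Rightarrow> 'a \<Rightarrow> real" where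
  "Vr M r x = measure M (ball x r)"

definition locally_integrable :: "'a::metric_space measure \<Rightarrow> ('a \<Rightarrow> real) \<Rightarrow> bool" where
  "locally_integrable M U \<longleftrightarrow> (\<forall>x r. set_integrable M (ball x r) U)"

text \<open>Reverse Hoelder class B_q, q in (1, infinity] (as an extended real).
  For finite q the inequality (avg_B U^q)^(1/q) <= C avg_B U is written in the
  equivalent form  int_B U^q <= mu(B) (C avg_B U)^q.\<close>
definition reverse_hoelder :: "'a::metric_space measure \<Rightarrow> ereal \<Rightarrow> ('a \<Rightarrow> real) \<Rightarrow> bool" where
  "reverse_hoelder M q U \<longleftrightarrow>
     U \<in> borel_measurable M \<and> (\<forall>x. 0 \<le> U x) \<and> locally_integrable M U \<and>
     (\<exists>C>0. \<forall>x r. 0 < r \<longrightarrow>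
        (let B = ball x r; avg = (1 / measure M B) * (LINT y:B|M. U y) in
          (if q = \<infinity> then (AE y in M. y \<in> B \<longrightarrow> U y \<le> C * avg)
           else (\<integral>\<^sup>+ y \<in> B. ennreal (U y powr real_of_ereal q) \<partial>M)
                  \<le> ennreal (measure M B * (C * avg) powr real_of_ereal q))))"

definition crit_rho :: "'a::metric_space measure \<Rightarrow> ('a \<Rightarrow> real) \<Rightarrow> 'a \<Rightarrow> ereal" where
  "crit_rho M U x = Sup (ereal ` {r. 0 < r \<and> r\<^sup>2 / Vr M r x * (LINT y:ball x r|M. U y) \<le> 1})"

end

theory Submission imports Defs begin

lemma rd_sets:
  assumes "rd_space M \<kappa> n" "A \<in> sets borel"
  shows "A \<in> sets M"
  using assms unfolding rd_space_def regular_borel_def by auto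

lemma rd_ball_sets: "rd_space M \<kappa> n \<Longrightarrow> ball x r \<in> sets M"
  by (rule rd_sets) auto

lemma rd_ball_fin:
  assumes "rd_space M \<kappa> n" "0 < r"
  shows "emeasure M (ball x r) = ennreal (measure M (ball x r))" "0 < measure M (ball x r)"
proof -
  have a: "0 < emeasure M (ball x r)" "emeasure M (ball x r) < \<infinity>"
    using assms unfolding rd_space_def by auto
  then show e: "emeasure M (ball x r) = ennreal (measure M (ball x r))"
    by (intro emeasure_eq_ennreal_measure) auto
  show "0 < measure M (ball x r)"
    using a e by (metis ennreal_less_zero_iff)
qed

lemma rd_diam_inf:
  fixes M :: "'a::metric_space measure"
  assumes rd: "rd_space M \<kappa> n" and inf: "emeasure M UNIV = \<infinity>"
  shows "space_diam TYPE('a) = \<infinity>"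
proof (rule ccontr)
  assume ne: "space_diam TYPE('a) \<noteq> \<infinity>"
  have ge: "ereal (dist x y) \<le> space_diam TYPE('a)" for x y :: 'a
  proof -
    have "ereal (dist (fst (x,y)) (snd (x,y))) \<le> space_diam TYPE('a)"
      unfolding space_diam_def by (rule SUP_upper) simp
    then show ?thesis by simp
  qed
  have "space_diam TYPE('a) \<noteq> -\<infinity>"
    using ge[of undefined undefined] by auto
  then obtain D where D: "space_diam TYPE('a) = ereal D"
    using ne by (cases "space_diam TYPE('a)") auto
  fix x0 :: 'a
  have "UNIV \<subseteq> ball x0 (D+1)"
  proof
    fix y :: 'a
    have "dist x0 y \<le> D" using ge[of x0 y] D by simp
    then show "y \<in> ball x0 (D+1)" by simp
  qed
  then have "emeasure M UNIV \<le> emeasure M (ball x0 (D+1))"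
    by (intro emeasure_mono rd_ball_sets[OF rd])
  also have "\<dots> < \<infinity>"
    using rd_ball_fin[OF rd, of "D+1" x0] ge[of x0 x0] D by simp
  finally show False using inf by simp
qed

lemma rd_upper:
  fixes M :: "'a::metric_space measure"
  assumes rd: "rd_space M \<kappa> n" and inf: "emeasure M UNIV = \<infinity>"
  shows "\<exists>C2\<ge>1. \<forall>x r R. 0 < r \<longrightarrow> r \<le> R \<longrightarrow>
     measure M (ball x R) \<le> C2 * (R/r) powr n * measure M (ball x r)"
proof -
  have di: "space_diam TYPE('a) = \<infinity>" using rd_diam_inf[OF rd inf] .
  obtain C2 where C2: "C2 \<ge> 1" and H: "\<And>x r lam. 0 < r \<Longrightarrow> ereal (2*r) < space_diam TYPE('a) \<Longrightarrow>
         1 \<le> lam \<Longrightarrow> ereal (2*lam*r) < space_diam TYPE('a) \<Longrightarrow>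
           measure M (ball x (lam*r)) \<le> C2 * lam powr n * measure M (ball x r)"
    using rd unfolding rd_space_def by blast
  show ?thesis
  proof (intro exI[of _ C2] conjI allI impI C2)
    fix x :: 'a and r R :: real assume r: "0 < r" "r \<le> R"
    have "measure M (ball x ((R/r)*r)) \<le> C2 * (R/r) powr n * measure M (ball x r)"
      using r by (intro H) (auto simp: di)
    then show "measure M (ball x R) \<le> C2 * (R/r) powr n * measure M (ball x r)"
      using r by simp
  qed
qed

lemma nn_set_conv:
  fixes U :: "'a \<Rightarrow> real"
  assumes "set_integrable M A U" "\<And>x. 0 \<le> U x"
  shows "(\<integral>\<^sup>+ y. ennreal (U y) * indicator A y \<partial>M) = ennreal (LINT y:A|M. U y)"
proof -
  have "(\<integral>\<^sup>+ y. ennreal (U y) * indicator A y \<partial>M) = (\<integral>\<^sup>+ y. ennreal (indicator A y *\<^sub>R U y) \<partial>M)"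
    by (intro nn_integral_cong) (auto split: split_indicator)
  also have "\<dots> = ennreal (integral\<^sup>L M (\<lambda>y. indicator A y *\<^sub>R U y))"
    using assms unfolding set_integrable_def
    by (intro nn_integral_eq_integral) (auto split: split_indicator)
  finally show ?thesis unfolding set_lebesgue_integral_def .
qed

lemma young_pt:
  fixes u l p :: real
  assumes "0 \<le> u" "0 < l" "1 < p"
  shows "u \<le> (l powr (1-p) / p) * u powr p + (1 - 1/p) * l"
proof -
  define p' where "p' = p / (p-1)"
  have p': "1 < p'" "1/p + 1/p' = 1" using assms unfolding p'_def by (auto simp: field_simps)
  have "(u/l) * 1 \<le> (u/l) powr p / p + 1 powr p' / p'"
    using assms p' by (intro Youngs_inequality) auto
  then have "u/l \<le> (u/l) powr p / p + (1 - 1/p)" using p' by simp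
  then have "l * (u/l) \<le> l * ((u/l) powr p / p + (1 - 1/p))"
    using assms by (intro mult_left_mono) auto
  moreover have "l * ((u/l) powr p / p) = (l powr (1-p) / p) * u powr p"
  proof -
    have "(u/l) powr p = u powr p / l powr p" using assms by (simp add: powr_divide)
    moreover have "l powr (1-p) = l / l powr p" using assms by (simp add: powr_diff)
    ultimately show ?thesis by simp
  qed
  ultimately show ?thesis using assms by (simp add: algebra_simps)
qed

lemma set_int_mono_sub:
  fixes U :: "'a \<Rightarrow> real"
  assumes "set_integrable M A U" "set_integrable M B U" "A \<subseteq> B" "\<And>x. 0 \<le> U x"
  shows "(LINT y:A|M. U y) \<le> (LINT y:B|M. U y)"
  unfolding set_lebesgue_integral_def
  using assms unfolding set_integrable_def
  by (intro Bochner_Integration.integral_mono) (auto split: split_indicator)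

lemma set_int_nonneg':
  fixes U :: "'a \<Rightarrow> real"
  assumes "\<And>x. 0 \<le> U x"
  shows "0 \<le> (LINT y:A|M. U y)"
  unfolding set_lebesgue_integral_def
  using assms by (intro Bochner_Integration.integral_nonneg_AE) (auto split: split_indicator)

lemma rh_finite_bound:
  fixes M :: "'a::metric_space measure"
  assumes rd: "rd_space M \<kappa> n"
    and Um: "U \<in> borel_measurable M" and U0: "\<And>x. 0 \<le> U x" and Ui: "locally_integrable M U"
    and p: "1 < p" and C: "0 < C"
    and RH: "\<And>x r. 0 < r \<Longrightarrow> (\<integral>\<^sup>+ y \<in> ball x r. ennreal (U y powr p) \<partial>M)
        \<le> ennreal (measure M (ball x r) * (C * ((1 / measure M (ball x r)) * (LINT y:ball x r|M. U y))) powr p)"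
    and r: "0 < r" "r \<le> R"
  shows "(LINT y:ball x r|M. U y) \<le> C * (measure M (ball x R) / measure M (ball x r)) powr (1/p)
           * ((1 / measure M (ball x R)) * (LINT y:ball x R|M. U y)) * measure M (ball x r)"
proof -
  define Vr where "Vr = measure M (ball x r)"
  define VR where "VR = measure M (ball x R)"
  define Ir where "Ir = (LINT y:ball x r|M. U y)"
  define IR where "IR = (LINT y:ball x R|M. U y)"
  define A where "A = (1 / VR) * IR"
  have Vr: "0 < Vr" and VR: "0 < VR" using rd_ball_fin[OF rd] r unfolding Vr_def VR_def by auto
  have sub: "ball x r \<subseteq> ball x R" using r by auto
  have IrR: "Ir \<le> IR" unfolding Ir_def IR_def
    using Ui sub U0 unfolding locally_integrable_def by (intro set_int_mono_sub) auto
  have Ir0: "0 \<le> Ir" unfolding Ir_def using U0 by (rule set_int_nonneg')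
  have A0: "0 \<le> A" unfolding A_def using IrR Ir0 VR by auto
  show ?thesis
  proof (cases "A = 0")
    case True
    then have "IR = 0" unfolding A_def using VR by simp
    then show ?thesis using IrR True unfolding Ir_def IR_def A_def VR_def by simp
  next
    case False
    then have Ap: "0 < A" using A0 by simp
    define l where "l = C * (VR / Vr) powr (1/p) * A"
    have lp: "0 < l" unfolding l_def using C Ap VR Vr by simp
    define \<alpha> where "\<alpha> = l powr (1-p) / p"
    define \<beta> where "\<beta> = (1 - 1/p) * l"
    have a0: "0 \<le> \<alpha>" and b0: "0 \<le> \<beta>" unfolding \<alpha>_def \<beta>_def using p lp by auto
    have pt: "ennreal (U y) * indicator (ball x r) y \<le>
        ennreal \<alpha> * (ennreal (U y powr p) * indicator (ball x R) y) + ennreal \<beta> * indicator (ball x r) y" for y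
    proof (cases "y \<in> ball x r")
      case True
      then have yR: "y \<in> ball x R" using sub by auto
      have "U y \<le> \<alpha> * U y powr p + \<beta>" unfolding \<alpha>_def \<beta>_def using young_pt[OF U0 lp p] .
      then have "ennreal (U y) \<le> ennreal (\<alpha> * U y powr p + \<beta>)" by (rule ennreal_leI)
      also have "\<dots> = ennreal \<alpha> * ennreal (U y powr p) + ennreal \<beta>"
        using a0 b0 by (simp add: ennreal_plus ennreal_mult)
      finally show ?thesis using True yR by simp
    qed simp
    have bR: "ball x R \<in> sets M" "ball x r \<in> sets M" using rd_ball_sets[OF rd] by auto
    have "(\<integral>\<^sup>+ y. ennreal (U y) * indicator (ball x r) y \<partial>M) \<le>
        (\<integral>\<^sup>+ y. ennreal \<alpha> * (ennreal (U y powr p) * indicator (ball x R) y) + ennreal \<beta> * indicator (ball x r) y \<partial>M)"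
      by (intro nn_integral_mono pt)
    also have "\<dots> = ennreal \<alpha> * (\<integral>\<^sup>+ y \<in> ball x R. ennreal (U y powr p) \<partial>M) + ennreal \<beta> * emeasure M (ball x r)"
      using Um bR by (simp add: nn_integral_add nn_integral_cmult)
    also have "\<dots> \<le> ennreal \<alpha> * ennreal (VR * (C * A) powr p) + ennreal \<beta> * ennreal Vr"
      using RH[of R x, OF order.strict_trans2[OF r]] rd_ball_fin(1)[OF rd r(1), of x] unfolding VR_def Vr_def A_def IR_def
      by (intro add_mono mult_left_mono) auto
    also have "\<dots> = ennreal (\<alpha> * (VR * (C * A) powr p) + \<beta> * Vr)"
      using a0 b0 VR Vr C Ap by (simp add: ennreal_plus ennreal_mult)
    also have "\<alpha> * (VR * (C * A) powr p) + \<beta> * Vr = l * Vr"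
    proof -
      have "l powr p = (C * A) powr p * (VR / Vr)"
        unfolding l_def using C Ap VR Vr p
        by (simp add: powr_mult powr_powr mult_ac)
      then have "VR * (C * A) powr p = l powr p * Vr" using Vr by (simp add: field_simps)
      moreover have "l powr (1-p) * l powr p = l" using lp by (simp add: powr_add[symmetric])
      ultimately show ?thesis unfolding \<alpha>_def \<beta>_def using p by (simp add: field_simps)
    qed
    finally have "ennreal Ir \<le> ennreal (l * Vr)"
      using nn_set_conv[of M "ball x r" U] Ui U0 unfolding locally_integrable_def Ir_def by simp
    then have "Ir \<le> l * Vr" using lp Vr by (subst (asm) ennreal_le_iff) auto
    then show ?thesis unfolding l_def A_def Ir_def IR_def Vr_def VR_def .
  qed
qed

lemma rd_vol_mono:
  assumes rd: "rd_space M \<kappa> n" and r: "0 < r" "r \<le> R"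
  shows "measure M (ball x r) \<le> measure M (ball x R)"
proof -
  have "emeasure M (ball x r) \<le> emeasure M (ball x R)"
    using r by (intro emeasure_mono rd_ball_sets[OF rd]) auto
  then show ?thesis using rd_ball_fin[OF rd, of r x] rd_ball_fin[OF rd, of R x] r
    by (simp add: ennreal_le_iff)
qed

lemma rh_inf_bound:
  fixes M :: "'a::metric_space measure"
  assumes rd: "rd_space M \<kappa> n"
    and Um: "U \<in> borel_measurable M" and U0: "\<And>x. 0 \<le> U x" and Ui: "locally_integrable M U"
    and p: "0 < p" and C: "0 < C"
    and RH: "\<And>x r. 0 < r \<Longrightarrow> (AE y in M. y \<in> ball x r \<longrightarrow> U y \<le> C * ((1 / measure M (ball x r)) * (LINT y:ball x r|M. U y)))"
    and r: "0 < r" "r \<le> R"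
  shows "(LINT y:ball x r|M. U y) \<le> C * (measure M (ball x R) / measure M (ball x r)) powr (1/p)
           * ((1 / measure M (ball x R)) * (LINT y:ball x R|M. U y)) * measure M (ball x r)"
proof -
  define Vr where "Vr = measure M (ball x r)"
  define VR where "VR = measure M (ball x R)"
  define Ir where "Ir = (LINT y:ball x r|M. U y)"
  define IR where "IR = (LINT y:ball x R|M. U y)"
  define A where "A = (1 / VR) * IR"
  have Vr: "0 < Vr" and VR: "0 < VR" using rd_ball_fin[OF rd] r unfolding Vr_def VR_def by auto
  have VrR: "Vr \<le> VR" unfolding Vr_def VR_def by (rule rd_vol_mono[OF rd r])
  have sub: "ball x r \<subseteq> ball x R" using r by auto
  have A0: "0 \<le> A" unfolding A_def IR_def using VR set_int_nonneg'[OF U0, of M "ball x R"] by simp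
  have br: "ball x r \<in> sets M" using rd_ball_sets[OF rd] by auto
  have "(\<integral>\<^sup>+ y. ennreal (U y) * indicator (ball x r) y \<partial>M) \<le> (\<integral>\<^sup>+ y. ennreal (C * A) * indicator (ball x r) y \<partial>M)"
  proof (rule nn_integral_mono_AE)
    show "AE y in M. ennreal (U y) * indicator (ball x r) y \<le> ennreal (C * A) * indicator (ball x r) y"
      using RH[of R x, OF order.strict_trans2[OF r]]
    proof eventually_elim
      case (elim y)
      then show ?case using sub unfolding A_def IR_def VR_def
        by (auto split: split_indicator intro: ennreal_leI)
    qed
  qed
  also have "\<dots> = ennreal (C * A) * emeasure M (ball x r)" using br by (simp add: nn_integral_cmult)
  also have "\<dots> = ennreal (C * A * Vr)"
    using rd_ball_fin(1)[OF rd r(1), of x] C A0 Vr unfolding Vr_def by (simp add: ennreal_mult)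
  finally have "ennreal Ir \<le> ennreal (C * A * Vr)"
    using nn_set_conv[of M "ball x r" U] Ui U0 unfolding locally_integrable_def Ir_def by simp
  then have "Ir \<le> C * A * Vr" using C A0 Vr by (subst (asm) ennreal_le_iff) auto
  also have "\<dots> \<le> C * (VR / Vr) powr (1/p) * A * Vr"
  proof -
    have "1 \<le> (VR / Vr) powr (1/p)" using VrR Vr p by (intro ge_one_powr_ge_zero) auto
    then have "C * 1 \<le> C * (VR / Vr) powr (1/p)" using C by (intro mult_left_mono) auto
    then show ?thesis using A0 Vr by (intro mult_right_mono) auto
  qed
  finally show ?thesis unfolding A_def Ir_def IR_def Vr_def VR_def .
qed

lemma rd_n_pos: "rd_space M \<kappa> n \<Longrightarrow> 0 < n"
  unfolding rd_space_def by auto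

lemma rh_bound:
  fixes M :: "'a::metric_space measure"
  assumes rd: "rd_space M \<kappa> n" and q: "ereal (max 1 (n/2)) < q" and RHq: "reverse_hoelder M q U"
  shows "\<exists>p C. max 1 (n/2) < p \<and> 0 < C \<and> (\<forall>x r R. 0 < r \<longrightarrow> r \<le> R \<longrightarrow>
     (LINT y:ball x r|M. U y) \<le> C * (measure M (ball x R) / measure M (ball x r)) powr (1/p)
           * ((1 / measure M (ball x R)) * (LINT y:ball x R|M. U y)) * measure M (ball x r))"
proof -
  have Um: "U \<in> borel_measurable M" and U0: "\<And>x. 0 \<le> U x" and Ui: "locally_integrable M U"
    using RHq unfolding reverse_hoelder_def by auto
  obtain C where C: "C > 0" and H: "\<And>x r. 0 < r \<Longrightarrow>
        (let B = ball x r; avg = (1 / measure M B) * (LINT y:B|M. U y) in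
          (if q = \<infinity> then (AE y in M. y \<in> B \<longrightarrow> U y \<le> C * avg)
           else (\<integral>\<^sup>+ y \<in> B. ennreal (U y powr real_of_ereal q) \<partial>M)
                  \<le> ennreal (measure M B * (C * avg) powr real_of_ereal q)))"
    using RHq unfolding reverse_hoelder_def by blast
  have n0: "0 < n" using rd_n_pos[OF rd] .
  show ?thesis
  proof (cases q)
    case (real p)
    have pq: "max 1 (n/2) < p" using q real by simp
    have "(LINT y:ball x r|M. U y) \<le> C * (measure M (ball x R) / measure M (ball x r)) powr (1/p)
           * ((1 / measure M (ball x R)) * (LINT y:ball x R|M. U y)) * measure M (ball x r)"
      if "0 < r" "r \<le> R" for x r R
    proof (rule rh_finite_bound[OF rd Um U0 Ui _ C _ that])
      show "1 < p" using pq by simp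
      fix x r assume "0 < (r::real)"
      from H[OF this, of x] show "(\<integral>\<^sup>+ y \<in> ball x r. ennreal (U y powr p) \<partial>M)
        \<le> ennreal (measure M (ball x r) * (C * ((1 / measure M (ball x r)) * (LINT y:ball x r|M. U y))) powr p)"
        using real by (simp add: Let_def)
    qed
    then show ?thesis using pq C by blast
  next
    case PInf
    have pq: "max 1 (n/2) < n + 1" using n0 by simp
    have "(LINT y:ball x r|M. U y) \<le> C * (measure M (ball x R) / measure M (ball x r)) powr (1/(n+1))
           * ((1 / measure M (ball x R)) * (LINT y:ball x R|M. U y)) * measure M (ball x r)"
      if "0 < r" "r \<le> R" for x r R
    proof (rule rh_inf_bound[OF rd Um U0 Ui _ C _ that])
      show "0 < n + 1" using n0 by simp
      fix x r assume "0 < (r::real)"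
      from H[OF this, of x] show "AE y in M. y \<in> ball x r \<longrightarrow> U y \<le> C * ((1 / measure M (ball x r)) * (LINT y:ball x r|M. U y))"
        using PInf by (simp add: Let_def)
    qed
    then show ?thesis using pq C by blast
  next
    case MInf
    then show ?thesis using q by simp
  qed
qed

definition psi :: "'a::metric_space measure \<Rightarrow> ('a \<Rightarrow> real) \<Rightarrow> 'a \<Rightarrow> real \<Rightarrow> real" where
  "psi M U x r = r\<^sup>2 / Vr M r x * (LINT y:ball x r|M. U y)"

lemma psi_nonneg: "(\<And>x. 0 \<le> U x) \<Longrightarrow> 0 \<le> psi M U x r"
  unfolding psi_def Vr_def using set_int_nonneg'[of U M "ball x r"] by auto

lemma powr_aux:
  fixes r R n p :: real
  assumes "0 < r" "r \<le> R" "0 < p"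
  shows "(R/r) powr (n/p) * r\<^sup>2 = (r/R) powr (2 - n/p) * R\<^sup>2"
proof -
  have t: "0 < r/R" using assms by simp
  have "(R/r) powr (n/p) = 1 / (r/R) powr (n/p)" using assms by (simp add: powr_divide)
  moreover have "r\<^sup>2 = (r/R) powr 2 * R\<^sup>2" using assms by (simp add: power_divide)
  moreover have "(r/R) powr 2 / (r/R) powr (n/p) = (r/R) powr (2 - n/p)" using t by (simp add: powr_diff)
  ultimately show ?thesis by (simp add: field_simps)
qed

lemma psi_decay:
  fixes M :: "'a::metric_space measure"
  assumes rd: "rd_space M \<kappa> n" and inf: "emeasure M UNIV = \<infinity>"
    and q: "ereal (max 1 (n/2)) < q" and RHq: "reverse_hoelder M q U"
  shows "\<exists>K>0. \<exists>\<delta>>0. \<delta> \<le> 1 \<and> (\<forall>x r R. 0 < r \<longrightarrow> r \<le> R \<longrightarrow> psi M U x r \<le> K * (r/R) powr \<delta> * psi M U x R)"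
proof -
  have U0: "\<And>x. 0 \<le> U x" using RHq unfolding reverse_hoelder_def by auto
  obtain p C where pq: "max 1 (n/2) < p" and C: "0 < C" and B: "\<And>x r R. 0 < r \<Longrightarrow> r \<le> R \<Longrightarrow>
     (LINT y:ball x r|M. U y) \<le> C * (measure M (ball x R) / measure M (ball x r)) powr (1/p)
           * ((1 / measure M (ball x R)) * (LINT y:ball x R|M. U y)) * measure M (ball x r)"
    using rh_bound[OF rd q RHq] by blast
  obtain C2 where C2: "C2 \<ge> 1" and UP: "\<And>x r R. 0 < r \<Longrightarrow> r \<le> R \<Longrightarrow>
     measure M (ball x R) \<le> C2 * (R/r) powr n * measure M (ball x r)"
    using rd_upper[OF rd inf] by blast
  have p0: "0 < p" using pq by simp
  define \<delta>0 where "\<delta>0 = 2 - n/p"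
  have d0: "0 < \<delta>0" unfolding \<delta>0_def using pq p0 by (simp add: field_simps)
  define \<delta> where "\<delta> = min \<delta>0 1"
  define K where "K = C * C2 powr (1/p)"
  have K: "0 < K" unfolding K_def using C C2 by simp
  have "psi M U x r \<le> K * (r/R) powr \<delta> * psi M U x R" if r: "0 < r" "r \<le> R" for x r R
  proof -
    define Vr where "Vr = measure M (ball x r)"
    define VR where "VR = measure M (ball x R)"
    define Ir where "Ir = (LINT y:ball x r|M. U y)"
    define IR where "IR = (LINT y:ball x R|M. U y)"
    define A where "A = (1 / VR) * IR"
    have Vr: "0 < Vr" and VR: "0 < VR" using rd_ball_fin[OF rd] r unfolding Vr_def VR_def by auto
    have A0: "0 \<le> A" unfolding A_def IR_def using VR set_int_nonneg'[OF U0, of M "ball x R"] by simp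
    have rat: "VR / Vr \<le> C2 * (R/r) powr n" using UP[OF r, of x] Vr unfolding VR_def Vr_def
      by (simp add: field_simps)
    have rat2: "(VR / Vr) powr (1/p) \<le> C2 powr (1/p) * (R/r) powr (n/p)"
    proof -
      have "(VR / Vr) powr (1/p) \<le> (C2 * (R/r) powr n) powr (1/p)"
        using rat Vr VR p0 by (intro powr_mono2) auto
      also have "\<dots> = C2 powr (1/p) * (R/r) powr (n/p)"
        using C2 r by (simp add: powr_mult powr_powr)
      finally show ?thesis .
    qed
    have "psi M U x r = r\<^sup>2 / Vr * Ir" unfolding psi_def Vr_def Ir_def Defs.Vr_def ..
    also have "\<dots> \<le> r\<^sup>2 / Vr * (C * (VR / Vr) powr (1/p) * A * Vr)"
      using B[OF r, of x] Vr unfolding Ir_def A_def IR_def VR_def Vr_def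
      by (intro mult_left_mono) auto
    also have "\<dots> = C * (VR / Vr) powr (1/p) * r\<^sup>2 * A" using Vr by simp
    also have "\<dots> \<le> C * (C2 powr (1/p) * (R/r) powr (n/p)) * r\<^sup>2 * A"
      using rat2 C A0 by (intro mult_right_mono mult_left_mono) auto
    also have "\<dots> = K * ((R/r) powr (n/p) * r\<^sup>2) * A" unfolding K_def by simp
    also have "\<dots> = K * (r/R) powr \<delta>0 * (R\<^sup>2 * A)"
      unfolding powr_aux[OF r p0] \<delta>0_def by simp
    also have "\<dots> \<le> K * (r/R) powr \<delta> * (R\<^sup>2 * A)"
    proof -
      have "(r/R) powr \<delta>0 \<le> (r/R) powr \<delta>" unfolding \<delta>_def
        using r by (intro powr_mono') auto
      then show ?thesis using K A0 by (intro mult_right_mono mult_left_mono) auto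
    qed
    also have "R\<^sup>2 * A = psi M U x R" unfolding psi_def A_def IR_def VR_def Defs.Vr_def by simp
    finally show ?thesis .
  qed
  moreover have "0 < \<delta>" "\<delta> \<le> 1" unfolding \<delta>_def using d0 by auto
  ultimately show ?thesis using K by blast
qed

lemma psi_growth:
  fixes M :: "'a::metric_space measure" and U :: "'a \<Rightarrow> real"
  assumes rd: "rd_space M \<kappa> n" and U0: "\<And>x. 0 \<le> U x" and Ui: "locally_integrable M U"
    and DU: "\<exists>C>0. \<forall>x r. 0 < r \<longrightarrow>
           (LINT y:ball x (2*r)|M. U y) \<le> C * (LINT y:ball x r|M. U y)"
  shows "\<exists>K2>0. \<exists>m::nat. 2 \<le> m \<and> (\<forall>y t R. 0 < t \<longrightarrow> t \<le> R \<longrightarrow> psi M U y R \<le> K2 * (R/t) ^ m * psi M U y t)"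
proof -
  obtain C where C: "C > 0" and D: "\<And>x r. 0 < r \<Longrightarrow> (LINT y:ball x (2*r)|M. U y) \<le> C * (LINT y:ball x r|M. U y)"
    using DU by blast
  obtain a :: nat where a: "max C 1 < 2^a" using real_arch_pow[of 2 "max C 1"] by auto
  define I where "I = (\<lambda>y r. (LINT z:ball y r|M. U z))"
  have I0: "0 \<le> I y r" for y r unfolding I_def by (rule set_int_nonneg'[OF U0])
  have Imono: "I y r \<le> I y R" if "r \<le> R" for y r R
    unfolding I_def using Ui that U0 unfolding locally_integrable_def
    by (intro set_int_mono_sub) auto
  have D': "I y (2*r) \<le> 2^a * I y r" if "0 < r" for y r
  proof -
    have "I y (2*r) \<le> C * I y r" using D[OF that] unfolding I_def .
    also have "\<dots> \<le> 2^a * I y r" using a I0[of y r] by (intro mult_right_mono) auto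
    finally show ?thesis .
  qed
  have Q: "\<forall>R. t \<le> R \<longrightarrow> R \<le> 2^k * t \<longrightarrow> I y R \<le> (2*R/t)^a * I y t" if t: "0 < t" for y t and k :: nat
  proof (induction k)
    case 0
    show ?case
    proof (intro allI impI)
      fix R assume "t \<le> R" "R \<le> 2^0 * t"
      then have R: "R = t" by simp
      have "1 * I y t \<le> (2*R/t)^a * I y t" using R t I0[of y t]
        by (intro mult_right_mono) auto
      then show "I y R \<le> (2*R/t)^a * I y t" using R by simp
    qed
  next
    case (Suc k)
    show ?case
    proof (intro allI impI)
      fix R assume R: "t \<le> R" "R \<le> 2^Suc k * t"
      show "I y R \<le> (2*R/t)^a * I y t"
      proof (cases "2*t \<le> R")
        case True
        have h: "t \<le> R/2" "R/2 \<le> 2^k * t" using True R by auto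
        have "I y R = I y (2*(R/2))" by simp
        also have "\<dots> \<le> 2^a * I y (R/2)" using D'[of "R/2" y] t h by simp
        also have "\<dots> \<le> 2^a * ((2*(R/2)/t)^a * I y t)"
        proof -
          have "I y (R/2) \<le> (2*(R/2)/t)^a * I y t" using Suc.IH h by blast
          then show ?thesis by (intro mult_left_mono) auto
        qed
        also have "\<dots> = (2*R/t)^a * I y t" by (simp add: power_mult_distrib[symmetric])
        finally show ?thesis .
      next
        case False
        have "I y R \<le> I y (2*t)" using False by (intro Imono) auto
        also have "\<dots> \<le> 2^a * I y t" using D'[OF t] .
        also have "\<dots> \<le> (2*R/t)^a * I y t"
          using R t I0[of y t] by (intro mult_right_mono power_mono) (auto simp: field_simps)
        finally show ?thesis .
      qed
    qed
  qed
  have "psi M U y R \<le> 2^a * (R/t) ^ (a+2) * psi M U y t" if t: "0 < t" "t \<le> R" for y t R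
  proof -
    obtain k :: nat where k: "R/t < 2^k" using real_arch_pow[of 2 "R/t"] by auto
    have IR: "I y R \<le> (2*R/t)^a * I y t" using Q[OF t(1), of k y] k t by (auto simp: field_simps)
    have Vt: "0 < Vr M t y" and VtR: "Vr M t y \<le> Vr M R y"
      using rd_ball_fin[OF rd t(1)] rd_vol_mono[OF rd t] unfolding Vr_def by auto
    have "psi M U y R = R\<^sup>2 / Vr M R y * I y R" unfolding psi_def I_def ..
    also have "\<dots> \<le> R\<^sup>2 / Vr M t y * I y R"
      using Vt VtR I0[of y R] by (intro mult_right_mono divide_left_mono) auto
    also have "\<dots> \<le> R\<^sup>2 / Vr M t y * ((2*R/t)^a * I y t)"
      using IR Vt by (intro mult_left_mono) auto
    also have "\<dots> = 2^a * ((R/t) ^ a * (R/t)\<^sup>2) * (t\<^sup>2 / Vr M t y * I y t)"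
      using t by (simp add: power_mult_distrib power_divide field_simps)
    also have "\<dots> = 2^a * (R/t) ^ (a+2) * psi M U y t"
      unfolding psi_def I_def power_add by (rule refl)
    finally show ?thesis .
  qed
  note G = this
  show ?thesis
    by (rule exI[of _ "2^a"], intro conjI exI[of _ "a+2"]) (use G in auto)
qed

lemma rd_vol_sub:
  assumes rd: "rd_space M \<kappa> n" and r: "0 < r" "0 < R" and sub: "ball x r \<subseteq> ball y R"
  shows "measure M (ball x r) \<le> measure M (ball y R)"
proof -
  have "emeasure M (ball x r) \<le> emeasure M (ball y R)"
    using sub by (intro emeasure_mono rd_ball_sets[OF rd])
  then show ?thesis using rd_ball_fin[OF rd, of r x] rd_ball_fin[OF rd, of R y] r
    by (simp add: ennreal_le_iff)
qed

lemma psi_cross: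
  fixes M :: "'a::metric_space measure" and U :: "'a \<Rightarrow> real"
  assumes rd: "rd_space M \<kappa> n" and U0: "\<And>x. 0 \<le> U x" and Ui: "locally_integrable M U"
  shows "\<exists>K3>0. \<forall>x y R. 0 < R \<longrightarrow> dist x y \<le> R \<longrightarrow> psi M U x R \<le> K3 * psi M U y (2*R)"
proof -
  obtain C1 where C1: "\<And>x r. 0 < r \<Longrightarrow> measure M (ball x (2*r)) \<le> C1 * measure M (ball x r)"
    using rd unfolding rd_space_def by blast
  have C1p: "0 < C1"
  proof -
    have "0 < measure M (ball undefined (2*1))" using rd_ball_fin[OF rd] by simp
    also have "\<dots> \<le> C1 * measure M (ball undefined 1)" using C1[of 1 undefined] by simp
    finally show ?thesis using rd_ball_fin(2)[OF rd, of 1 undefined] by (simp add: zero_less_mult_iff)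
  qed
  have "psi M U x R \<le> (C1^2/4) * psi M U y (2*R)" if R: "0 < R" "dist x y \<le> R" for x y R
  proof -
    define Vx where "Vx = measure M (ball x R)"
    define Vy where "Vy = measure M (ball y (2*R))"
    have Vx: "0 < Vx" and Vy: "0 < Vy" using rd_ball_fin[OF rd] R unfolding Vx_def Vy_def by auto
    have s1: "ball y (2*R) \<subseteq> ball x (4*R)"
    proof
      fix z assume "z \<in> ball y (2*R)"
      then have "dist y z < 2*R" by simp
      then have "dist x z < 4*R" using dist_triangle[of x z y] R by simp
      then show "z \<in> ball x (4*R)" by simp
    qed
    have "Vy \<le> measure M (ball x (4*R))" unfolding Vy_def using R s1 by (intro rd_vol_sub[OF rd]) auto
    also have "\<dots> = measure M (ball x (2*(2*R)))" by simp
    also have "\<dots> \<le> C1 * measure M (ball x (2*R))" using C1[of "2*R" x] R by simp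
    also have "\<dots> \<le> C1 * (C1 * Vx)" using C1[of R x] C1p R unfolding Vx_def by (intro mult_left_mono) auto
    finally have VyVx: "Vy \<le> C1^2 * Vx" by (simp add: power2_eq_square)
    have s2: "ball x R \<subseteq> ball y (2*R)"
    proof
      fix z assume "z \<in> ball x R"
      then have "dist x z < R" by simp
      then have "dist y z < 2*R" using dist_triangle[of y z x] R by (simp add: dist_commute)
      then show "z \<in> ball y (2*R)" by simp
    qed
    define Ix where "Ix = (LINT z:ball x R|M. U z)"
    define Iy where "Iy = (LINT z:ball y (2*R)|M. U z)"
    have IxIy: "Ix \<le> Iy" unfolding Ix_def Iy_def using Ui s2 U0 unfolding locally_integrable_def
      by (intro set_int_mono_sub) auto
    have Ix0: "0 \<le> Ix" unfolding Ix_def by (rule set_int_nonneg'[OF U0])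
    have "psi M U x R = R\<^sup>2 / Vx * Ix" unfolding psi_def Vx_def Ix_def Vr_def ..
    also have "\<dots> \<le> R\<^sup>2 / Vx * Iy" using IxIy Vx by (intro mult_left_mono) auto
    also have "\<dots> \<le> (C1^2 * R\<^sup>2 / Vy) * Iy"
    proof -
      have "R\<^sup>2 / Vx \<le> C1^2 * R\<^sup>2 / Vy" using VyVx Vx Vy R by (simp add: field_simps)
      then show ?thesis using IxIy Ix0 by (intro mult_right_mono) auto
    qed
    also have "\<dots> = (C1^2/4) * psi M U y (2*R)" unfolding psi_def Vy_def Iy_def Vr_def
      by (simp add: power_mult_distrib)
    finally show ?thesis .
  qed
  then show ?thesis using C1p by (intro exI[of _ "C1^2/4"]) auto
qed

lemma generic_bound:
  fixes L m \<delta> :: real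
  assumes L: "0 < L" and dm: "0 < \<delta>" "\<delta> < m"
  shows "\<exists>Cst\<ge>1. \<forall>t p d. 0 < t \<longrightarrow> 0 < p \<longrightarrow> 0 \<le> d \<longrightarrow>
           t powr m \<le> L * p powr \<delta> * (t+d) powr (m-\<delta>) \<longrightarrow>
           t \<le> Cst * p powr (\<delta>/m) * (p+d) powr (1-\<delta>/m)"
proof -
  define L' where "L' = L * 2 powr m"
  have L': "0 < L'" unfolding L'_def using L by simp
  define Cst where "Cst = max 1 (max (L' powr (1/m)) (L' powr (1/\<delta>)))"
  have m0: "0 < m" using dm by simp
  have "t \<le> Cst * p powr (\<delta>/m) * (p+d) powr (1-\<delta>/m)"
    if t: "0 < t" and p: "0 < p" and d: "0 \<le> d" and H: "t powr m \<le> L * p powr \<delta> * (t+d) powr (m-\<delta>)" for t p d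
  proof -
    have e1: "0 \<le> 1 - \<delta>/m" using dm by (simp add: field_simps)
    have pd: "0 < p + d" using p d by simp
    have rhs0: "0 \<le> p powr (\<delta>/m) * (p+d) powr (1-\<delta>/m)" by simp
    have pp: "p \<le> p powr (\<delta>/m) * (p+d) powr (1-\<delta>/m)"
    proof -
      have "p = p powr (\<delta>/m) * p powr (1-\<delta>/m)" using p by (simp add: powr_add[symmetric])
      also have "\<dots> \<le> p powr (\<delta>/m) * (p+d) powr (1-\<delta>/m)"
        using p d e1 by (intro mult_left_mono powr_mono2) auto
      finally show ?thesis .
    qed
    show ?thesis
    proof (cases "t \<le> d")
      case True
      have "t powr m \<le> L * p powr \<delta> * (2*(p+d)) powr (m-\<delta>)"
        using H True t p dm L
        by (elim order.trans, intro mult_left_mono powr_mono2) auto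
      also have "\<dots> = L * p powr \<delta> * (2 powr (m-\<delta>) * (p+d) powr (m-\<delta>))"
        using pd by (subst powr_mult[of 2 "p+d"]) auto
      also have "\<dots> \<le> L * p powr \<delta> * (2 powr m * (p+d) powr (m-\<delta>))"
        using L dm by (intro mult_left_mono mult_right_mono powr_mono) auto
      also have "\<dots> = L' * p powr \<delta> * (p+d) powr (m-\<delta>)" unfolding L'_def by simp
      finally have h: "t powr m \<le> L' * p powr \<delta> * (p+d) powr (m-\<delta>)" .
      have "t = (t powr m) powr (1/m)" using t m0 by (simp add: powr_powr)
      also have "\<dots> \<le> (L' * p powr \<delta> * (p+d) powr (m-\<delta>)) powr (1/m)"
        using h m0 by (intro powr_mono2) auto
      also have "\<dots> = L' powr (1/m) * p powr (\<delta>/m) * (p+d) powr (1-\<delta>/m)"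
        using L' p pd m0 by (simp add: powr_mult powr_powr diff_divide_distrib)
      also have "\<dots> \<le> Cst * p powr (\<delta>/m) * (p+d) powr (1-\<delta>/m)"
        unfolding Cst_def using rhs0 by (intro mult_right_mono) (auto simp: mult.assoc)
      finally show ?thesis .
    next
      case False
      have "t powr m \<le> L * p powr \<delta> * (2*t) powr (m-\<delta>)"
        using H False t p dm L d
        by (elim order.trans, intro mult_left_mono powr_mono2) auto
      also have "\<dots> = L * p powr \<delta> * (2 powr (m-\<delta>) * t powr (m-\<delta>))"
        using t by (subst powr_mult[of 2 t]) auto
      also have "\<dots> \<le> L * p powr \<delta> * (2 powr m * t powr (m-\<delta>))"
        using L dm by (intro mult_left_mono mult_right_mono powr_mono) auto
      also have "\<dots> = (L' * p powr \<delta>) * t powr (m-\<delta>)" unfolding L'_def by simp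
      finally have h: "t powr \<delta> * t powr (m-\<delta>) \<le> (L' * p powr \<delta>) * t powr (m-\<delta>)"
        using t by (simp add: powr_add[symmetric])
      then have h2: "t powr \<delta> \<le> L' * p powr \<delta>" using t by simp
      have "t = (t powr \<delta>) powr (1/\<delta>)" using t dm by (simp add: powr_powr)
      also have "\<dots> \<le> (L' * p powr \<delta>) powr (1/\<delta>)"
        using h2 dm by (intro powr_mono2) auto
      also have "\<dots> = L' powr (1/\<delta>) * p"
        using L' p dm by (simp add: powr_mult powr_powr)
      also have "\<dots> \<le> L' powr (1/\<delta>) * (p powr (\<delta>/m) * (p+d) powr (1-\<delta>/m))"
        using pp by (intro mult_left_mono) auto
      also have "\<dots> \<le> Cst * (p powr (\<delta>/m) * (p+d) powr (1-\<delta>/m))"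
        unfolding Cst_def using rhs0 by (intro mult_right_mono) auto
      finally show ?thesis by (simp add: mult.assoc)
    qed
  qed
  moreover have "Cst \<ge> 1" unfolding Cst_def by simp
  ultimately show ?thesis by blast
qed

lemma crit_rho_psi: "crit_rho M U x = Sup (ereal ` {r. 0 < r \<and> psi M U x r \<le> 1})"
  unfolding crit_rho_def psi_def ..

lemma rho_upper: "0 < r \<Longrightarrow> psi M U x r \<le> 1 \<Longrightarrow> ereal r \<le> crit_rho M U x"
  unfolding crit_rho_psi by (rule Sup_upper) auto

lemma rho_exceed: "crit_rho M U x = ereal \<rho> \<Longrightarrow> \<rho> < r \<Longrightarrow> 0 < r \<Longrightarrow> 1 < psi M U x r"
  using rho_upper[of r M U x] by force

lemma rho_approx:
  assumes "crit_rho M U x = ereal \<rho>" "0 < \<rho>"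
  shows "\<exists>t. 0 < t \<and> psi M U x t \<le> 1 \<and> \<rho>/2 < t"
proof -
  have "ereal (\<rho>/2) < Sup (ereal ` {r. 0 < r \<and> psi M U x r \<le> 1})"
    using assms unfolding crit_rho_psi by simp
  then obtain e where "e \<in> ereal ` {r. 0 < r \<and> psi M U x r \<le> 1}" "ereal (\<rho>/2) < e"
    unfolding less_Sup_iff by blast
  then show ?thesis by auto
qed

lemma exists_pos_ball:
  fixes M :: "'a::metric_space measure" and U :: "'a \<Rightarrow> real"
  assumes rd: "rd_space M \<kappa> n" and U0: "\<And>x. 0 \<le> U x" and Ui: "locally_integrable M U"
    and nz: "\<not> (AE x in M. U x = 0)"
  shows "\<exists>R>0. 0 < (LINT y:ball x R|M. U y)"
proof (rule ccontr)
  assume neg: "\<not> ?thesis"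
  have z: "(LINT y:ball x (real (Suc k))|M. U y) = 0" for k
  proof -
    have "0 < real (Suc k)" by simp
    then have "\<not> 0 < (LINT y:ball x (real (Suc k))|M. U y)" using neg by blast
    moreover have "0 \<le> (LINT y:ball x (real (Suc k))|M. U y)" by (rule set_int_nonneg'[OF U0])
    ultimately show ?thesis by linarith
  qed
  have Ak: "AE y in M. indicator (ball x (real (Suc k))) y *\<^sub>R U y = 0" for k
  proof -
    have int: "integrable M (\<lambda>y. indicator (ball x (real (Suc k))) y *\<^sub>R U y)"
      using Ui unfolding locally_integrable_def set_integrable_def by auto
    have "integral\<^sup>L M (\<lambda>y. indicator (ball x (real (Suc k))) y *\<^sub>R U y) = 0"
      using z[of k] unfolding set_lebesgue_integral_def .
    moreover have "AE y in M. 0 \<le> indicator (ball x (real (Suc k))) y *\<^sub>R U y"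
      using U0 by (intro AE_I2) (simp add: split: split_indicator)
    ultimately show ?thesis using integral_nonneg_eq_0_iff_AE[OF int] by blast
  qed
  have "AE y in M. \<forall>k. indicator (ball x (real (Suc k))) y *\<^sub>R U y = 0"
    by (rule AE_all_countable[THEN iffD2]) (rule allI, rule Ak)
  then have "AE y in M. U y = 0"
  proof eventually_elim
    case (elim y)
    obtain k :: nat where "dist x y < real k" using reals_Archimedean2 by blast
    then have "y \<in> ball x (real (Suc k))" by simp
    then show ?case using elim[rule_format, of k] by simp
  qed
  then show False using nz by simp
qed

lemma rho_pos_fin:
  fixes M :: "'a::metric_space measure" and x :: 'a and U :: "'a \<Rightarrow> real"
  assumes rd: "rd_space M \<kappa> n" and inf: "emeasure M UNIV = \<infinity>"
    and q: "ereal (max 1 (n/2)) < q" and RHq: "reverse_hoelder M q U"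
    and nz: "\<not> (AE x in M. U x = 0)"
  shows "\<exists>\<rho>. crit_rho M U x = ereal \<rho> \<and> 0 < \<rho>"
proof -
  have U0: "\<And>x. 0 \<le> U x" and Ui: "locally_integrable M U"
    using RHq unfolding reverse_hoelder_def by auto
  obtain K \<delta> where K: "0 < K" and d: "0 < \<delta>" and DEC: "\<And>x r R. 0 < r \<Longrightarrow> r \<le> R \<Longrightarrow> psi M U x r \<le> K * (r/R) powr \<delta> * psi M U x R"
    using psi_decay[OF rd inf q RHq] by blast
  have ps1: "0 \<le> psi M U x 1" by (rule psi_nonneg[OF U0])
  define c where "c = K * (psi M U x 1 + 1)"
  have c: "0 < c" unfolding c_def using K ps1 by simp
  define r0 where "r0 = min 1 (c powr (-1/\<delta>))"
  have r0: "0 < r0" "r0 \<le> 1" unfolding r0_def using c by auto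
  have "psi M U x r0 \<le> K * (r0/1) powr \<delta> * psi M U x 1" using DEC[OF r0] .
  also have "\<dots> \<le> K * (c powr (-1/\<delta>)) powr \<delta> * psi M U x 1"
    using r0 K d ps1 unfolding r0_def
    by (intro mult_right_mono mult_left_mono powr_mono2) auto
  also have "\<dots> = K * psi M U x 1 / c"
  proof -
    have "(c powr (-1/\<delta>)) powr \<delta> = c powr (-1)" using d by (simp add: powr_powr)
    also have "\<dots> = 1 / c" using c by (simp add: powr_minus divide_inverse)
    finally show ?thesis by simp
  qed
  also have "\<dots> \<le> 1" using c unfolding c_def using K ps1
    by (simp add: field_simps)
  finally have r0in: "psi M U x r0 \<le> 1" .
  have lo: "ereal r0 \<le> crit_rho M U x" by (rule rho_upper[OF r0(1) r0in])
  obtain R0 where R0: "0 < R0" "0 < (LINT y:ball x R0|M. U y)"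
    using exists_pos_ball[OF rd U0 Ui nz] by blast
  have ps0: "0 < psi M U x R0" unfolding psi_def Vr_def using R0 rd_ball_fin(2)[OF rd R0(1), of x] by simp
  define B where "B = max R0 (R0 * (K / psi M U x R0) powr (1/\<delta>))"
  have bnd: "r \<le> B" if "0 < r" "psi M U x r \<le> 1" for r
  proof (cases "r \<le> R0")
    case True then show ?thesis unfolding B_def by simp
  next
    case False
    have "psi M U x R0 \<le> K * (R0/r) powr \<delta> * psi M U x r" using DEC[of R0 r x] R0 False by simp
    also have "\<dots> \<le> K * (R0/r) powr \<delta>" using that K by (simp add: mult_left_le)
    finally have h: "psi M U x R0 / K \<le> (R0/r) powr \<delta>" using K by (simp add: field_simps)
    have "(psi M U x R0 / K) powr (1/\<delta>) \<le> ((R0/r) powr \<delta>) powr (1/\<delta>)"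
      using h ps0 K d by (intro powr_mono2) auto
    also have "\<dots> = R0/r" using d R0 that by (simp add: powr_powr)
    finally have "(psi M U x R0 / K) powr (1/\<delta>) \<le> R0/r" .
    then have "r * (psi M U x R0 / K) powr (1/\<delta>) \<le> R0" using that by (simp add: field_simps)
    then have "r \<le> R0 / (psi M U x R0 / K) powr (1/\<delta>)" using ps0 K by (simp add: field_simps)
    also have "\<dots> = R0 * (K / psi M U x R0) powr (1/\<delta>)"
      using ps0 K by (simp add: powr_divide)
    finally show ?thesis unfolding B_def by simp
  qed
  have up: "crit_rho M U x \<le> ereal B"
    unfolding crit_rho_psi using bnd by (intro Sup_least) auto
  obtain \<rho> where "crit_rho M U x = ereal \<rho>" using lo up by (cases "crit_rho M U x") auto
  moreover have "0 < \<rho>" using lo r0 calculation by simp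
  ultimately show ?thesis by blast
qed

lemma pp_bound:
  fixes p d a :: real
  assumes "0 < p" "0 \<le> d" "0 \<le> 1 - a"
  shows "p \<le> p powr a * (p+d) powr (1-a)"
proof -
  have "p = p powr a * p powr (1-a)" using assms by (simp add: powr_add[symmetric])
  also have "\<dots> \<le> p powr a * (p+d) powr (1-a)"
    using assms by (intro mult_left_mono powr_mono2) auto
  finally show ?thesis .
qed

theorem proposition2p1:
  fixes M :: "'a::metric_space measure" and \<kappa> n :: real and q :: ereal and U :: "'a \<Rightarrow> real"
  assumes "rd_space M \<kappa> n"
    and "emeasure M UNIV = \<infinity>"
    and "ereal (max 1 (n/2)) < q"
    and "reverse_hoelder M q U"
    and "\<forall>x. 0 \<le> U x"
    and "\<not> (AE x in M. U x = 0)"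
    and "\<exists>C>0. \<forall>x r. 0 < r \<longrightarrow>
           (LINT y:ball x (2*r)|M. U y) \<le> C * (LINT y:ball x r|M. U y)"
  shows "(\<forall>x. 0 < crit_rho M U x \<and> crit_rho M U x < \<infinity>) \<and>
         (\<exists>C3>0. \<exists>k0>0. \<forall>x y.
            real_of_ereal (crit_rho M U y) \<le>
              C3 * real_of_ereal (crit_rho M U x) powr (1/(1+k0))
                 * (real_of_ereal (crit_rho M U x) + dist x y) powr (k0/(1+k0)))"
proof -
  note rd = assms(1) and inf = assms(2) and q = assms(3) and RHq = assms(4) and nz = assms(6) and DU = assms(7)
  have U0: "\<And>x. 0 \<le> U x" and Ui: "locally_integrable M U"
    using RHq unfolding reverse_hoelder_def by auto
  define \<rho> where "\<rho> x = real_of_ereal (crit_rho M U x)" for x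
  have rho: "crit_rho M U x = ereal (\<rho> x) \<and> 0 < \<rho> x" for x
    using rho_pos_fin[OF rd inf q RHq nz, of x] unfolding \<rho>_def by auto
  have part1: "\<forall>x. 0 < crit_rho M U x \<and> crit_rho M U x < \<infinity>" using rho by simp
  obtain K \<delta> where K: "0 < K" and d: "0 < \<delta>" "\<delta> \<le> 1"
    and DEC: "\<And>x r R. 0 < r \<Longrightarrow> r \<le> R \<Longrightarrow> psi M U x r \<le> K * (r/R) powr \<delta> * psi M U x R"
    using psi_decay[OF rd inf q RHq] by blast
  obtain K2 and m :: nat where K2: "0 < K2" and m: "2 \<le> m"
    and GRO: "\<And>y t R. 0 < t \<Longrightarrow> t \<le> R \<Longrightarrow> psi M U y R \<le> K2 * (R/t) ^ m * psi M U y t"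
    using psi_growth[OF rd U0 Ui DU] by blast
  obtain K3 where K3: "0 < K3"
    and CRO: "\<And>x y R. 0 < R \<Longrightarrow> dist x y \<le> R \<Longrightarrow> psi M U x R \<le> K3 * psi M U y (2*R)"
    using psi_cross[OF rd U0 Ui] by blast
  define mr where "mr = real m"
  have dm: "\<delta> < mr" using d m unfolding mr_def by simp
  have mr0: "0 < mr" using dm d by simp
  define L where "L = K * K3 * K2 * 2^m"
  have L: "0 < L" unfolding L_def using K K2 K3 by simp
  obtain Cst where Cst: "Cst \<ge> 1" and GB: "\<And>t p d. 0 < t \<Longrightarrow> 0 < p \<Longrightarrow> 0 \<le> d \<Longrightarrow>
           t powr mr \<le> L * p powr \<delta> * (t+d) powr (mr-\<delta>) \<Longrightarrow>
           t \<le> Cst * p powr (\<delta>/mr) * (p+d) powr (1-\<delta>/mr)"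
    using generic_bound[OF L d(1) dm] by blast
  define a where "a = \<delta>/mr"
  have a: "0 < a" "0 \<le> 1 - a" unfolding a_def using d dm mr0 by (auto simp: field_simps)
  have key: "\<rho> y \<le> (4*Cst) * \<rho> x powr a * (\<rho> x + dist x y) powr (1 - a)" for x y
  proof -
    define dd where "dd = dist x y"
    have dd: "0 \<le> dd" unfolding dd_def by simp
    define p where "p = 2 * \<rho> x"
    have p: "0 < p" unfolding p_def using rho[of x] by simp
    have px: "1 < psi M U x p" using rho_exceed[of M U x "\<rho> x" p] rho[of x] p unfolding p_def by simp
    obtain t where t: "0 < t" "psi M U y t \<le> 1" "\<rho> y / 2 < t"
      using rho_approx[of M U y "\<rho> y"] rho[of y] by blast
    have tb: "t \<le> Cst * p powr a * (p+dd) powr (1-a)"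
    proof (cases "t + dd < p")
      case True
      then have "t \<le> p" using dd by simp
      also have "\<dots> \<le> p powr a * (p+dd) powr (1-a)" using pp_bound[OF p dd a(2)] .
      also have "\<dots> \<le> Cst * (p powr a * (p+dd) powr (1-a))"
        using Cst mult_right_mono[of 1 Cst "p powr a * (p+dd) powr (1-a)"] by simp
      finally show ?thesis by (simp add: mult.assoc)
    next
      case False
      define R where "R = t + dd"
      have R: "p \<le> R" "0 < R" "dist x y \<le> R" "t \<le> 2*R" using False t dd unfolding R_def dd_def by (auto intro: add_pos_nonneg)
      have ps0: "0 \<le> psi M U y t" by (rule psi_nonneg[OF U0])
      have "1 < psi M U x p" by (rule px)
      also have "\<dots> \<le> K * (p/R) powr \<delta> * psi M U x R" using DEC[OF p R(1)] .
      also have "\<dots> \<le> K * (p/R) powr \<delta> * (K3 * psi M U y (2*R))"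
        using CRO[OF R(2,3)] K by (intro mult_left_mono) auto
      also have "\<dots> \<le> K * (p/R) powr \<delta> * (K3 * (K2 * (2*R/t) ^ m * psi M U y t))"
        using GRO[OF t(1) R(4)] K K3 by (intro mult_left_mono) auto
      also have "\<dots> \<le> K * (p/R) powr \<delta> * (K3 * (K2 * (2*R/t) ^ m * 1))"
        using t(2) ps0 K K3 K2 t R by (intro mult_left_mono) auto
      finally have h1: "1 < K * K3 * K2 * (p/R) powr \<delta> * (2*R/t) ^ m" by (simp add: mult_ac)
      have "t ^ m < t ^ m * (K * K3 * K2 * (p/R) powr \<delta> * (2*R/t) ^ m)"
        using h1 t by simp
      also have "\<dots> = L * (p/R) powr \<delta> * R ^ m"
        unfolding L_def using t by (simp add: power_mult_distrib power_divide field_simps)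
      finally have h2: "t ^ m < L * (p/R) powr \<delta> * R ^ m" .
      have "t powr mr = t ^ m" unfolding mr_def using t by (simp add: powr_realpow)
      also have "\<dots> \<le> L * (p/R) powr \<delta> * R ^ m" using h2 by simp
      also have "\<dots> = L * p powr \<delta> * (t+dd) powr (mr-\<delta>)"
      proof -
        have "R ^ m = R powr mr" unfolding mr_def using R by (simp add: powr_realpow)
        moreover have "(p/R) powr \<delta> = p powr \<delta> / R powr \<delta>" using p R by (simp add: powr_divide)
        ultimately have "L * (p/R) powr \<delta> * R ^ m = L * p powr \<delta> * (R powr mr / R powr \<delta>)"
          by (simp add: field_simps)
        also have "\<dots> = L * p powr \<delta> * R powr (mr - \<delta>)" using R by (simp add: powr_diff)
        finally show ?thesis unfolding R_def .
      qed
      finally have "t powr mr \<le> L * p powr \<delta> * (t+dd) powr (mr-\<delta>)" .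
      from GB[OF t(1) p dd this] show ?thesis unfolding a_def .
    qed
    have "\<rho> y \<le> 2 * t" using t by simp
    also have "\<dots> \<le> 2 * (Cst * p powr a * (p+dd) powr (1-a))" using tb by simp
    also have "\<dots> \<le> 2 * (Cst * (2 powr a * \<rho> x powr a) * (2 powr (1-a) * (\<rho> x + dd) powr (1-a)))"
    proof -
      have e1: "p powr a = 2 powr a * \<rho> x powr a" unfolding p_def using rho[of x] by (simp add: powr_mult)
      have "(p+dd) powr (1-a) \<le> (2 * (\<rho> x + dd)) powr (1-a)"
        unfolding p_def using rho[of x] dd a by (intro powr_mono2) auto
      also have "\<dots> = 2 powr (1-a) * (\<rho> x + dd) powr (1-a)"
        using rho[of x] dd by (subst powr_mult) auto
      finally have e2: "(p+dd) powr (1-a) \<le> 2 powr (1-a) * (\<rho> x + dd) powr (1-a)" .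
      show ?thesis unfolding e1 using e2 Cst by (intro mult_left_mono) auto
    qed
    also have "\<dots> = 2 * Cst * (2 powr a * 2 powr (1-a)) * \<rho> x powr a * (\<rho> x + dd) powr (1-a)"
      by (simp add: mult_ac)
    also have "2 powr a * 2 powr (1-a) = (2::real)" by (simp add: powr_add[symmetric])
    finally show ?thesis unfolding dd_def by (simp add: mult_ac)
  qed
  define k0 where "k0 = mr/\<delta> - 1"
  have k0: "0 < k0" unfolding k0_def using d dm by (simp add: field_simps)
  have e1: "1/(1+k0) = a" unfolding k0_def a_def using d mr0 by (simp add: field_simps)
  have e2: "k0/(1+k0) = 1 - a" unfolding k0_def a_def using d mr0 by (simp add: field_simps)
  have "\<exists>C3>0. \<exists>k0>0. \<forall>x y.
            real_of_ereal (crit_rho M U y) \<le>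
              C3 * real_of_ereal (crit_rho M U x) powr (1/(1+k0))
                 * (real_of_ereal (crit_rho M U x) + dist x y) powr (k0/(1+k0))"
  proof -
    have "\<forall>x y. real_of_ereal (crit_rho M U y) \<le>
              (4*Cst) * real_of_ereal (crit_rho M U x) powr (1/(1+k0))
                 * (real_of_ereal (crit_rho M U x) + dist x y) powr (k0/(1+k0))"
      unfolding e1 e2 using key unfolding \<rho>_def by blast
    moreover have "0 < 4*Cst" using Cst by simp
    ultimately show ?thesis using k0 by blast
  qed
  with part1 show ?thesis by blast
qed

end
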